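(* Let $P$ be a valid path with $m=m_T^P$ toll arcs $\tau_1,\dots,\tau_m$ and let $T$ be a nonnegative toll vector. Then $T$ is consistent with $P$ if and only if $$\mathcal{L}_{i,j}+\mathcal{T}_{i,j}\le \mathcal{U}_{i,j}\qquad\text{for all }0\le i<j\le m+1.$$
   Context: Setting: $G=(V,A)$ is a directed multigraph with $A=A_T\cup A_U$ partitioned into toll arcs $A_T$ and toll-free arcs $A_U$, fixed costs $c:A_T\to\mathbf{N}$, $d:A_U\to\mathbf{N}$, and vertices $s,t$ such that there is an $s$–$t$ path using only toll-free arcs. A toll vector $T$ assigns a toll $T(e)\ge 0$ to each toll arc; under $T$ a toll arc $e$ costs $c(e)+T(e)$ and a toll-free arc $e$ costs $d(e)$, and the length of a path is the sum of the costs of its arcs. For an $s$–$t$ path $P$, $\mathcal{N}_T(P)$ denotes the network obtained by deleting all toll arcs not on $P$, with the costs induced by $T$. A path $P$ from $s$ to $t$ is valid if it contains $m_T^P\ge 1$ toll arcs and $P$ is a shortest $s$–$t$ path in $\mathcal{N}_0(P)$ (all tolls zero). Write a valid path as $P=(\upsilon_{0,1},\tau_1,\upsilon_{1,2},\tau_2,\dots,\tau_m,\upsilon_{m,m+1})$, where $m=m_T^P$, $\tau_i$ is the $i$-th toll arc in order of traversal and $\upsilon_{i,i+1}$ is the subpath (of toll-free arcs) between consecutive toll arcs; set $\mathrm{TERM}(\tau_0)=s$ and $\mathrm{INIT}(\tau_{m+1})=t$, where $\mathrm{INIT},\mathrm{TERM}$ denote initial and terminal vertices of an arc. For $0\le i<j\le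 m+1$, $\mathcal{U}_{i,j}$ is the length of a shortest path from $\mathrm{TERM}(\tau_i)$ to $\mathrm{INIT}(\tau_j)$ using only toll-free arcs ($+\infty$ if none). For $0\le k<l\le m+1$, $\mathcal{L}_{k,l}=\sum_{i=k}^{l-1}\mathcal{U}_{i,i+1}+\sum_{i=k+1}^{l-1}c(\tau_i)$ and $\mathcal{T}_{k,l}=\sum_{i=k+1}^{l-1}T(\tau_i)$ (empty sums are $0$). A toll vector $T$ is consistent with a valid path $P$ if $P$ is a shortest $s$–$t$ path in $\mathcal{N}_T(P)$. *)

theory Defs
  imports Main "HOL-Library.Extended_Real"
begin

text \<open>A directed multigraph is given by an abstract arc type 'a with initial / terminal
vertex maps ini, ter :: 'a => 'v.  The arc set is AT \<union> AU (toll arcs / toll-free arcs).\<close>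

fun walk :: "('a \<Rightarrow> 'v) \<Rightarrow> ('a \<Rightarrow> 'v) \<Rightarrow> 'v \<Rightarrow> 'a list \<Rightarrow> 'v \<Rightarrow> bool" where
  "walk ini ter u [] v = (u = v)"
| "walk ini ter u (e # es) v = (ini e = u \<and> walk ini ter (ter e) es v)"

definition is_path :: "('a \<Rightarrow> 'v) \<Rightarrow> ('a \<Rightarrow> 'v) \<Rightarrow> 'a set \<Rightarrow> 'v \<Rightarrow> 'a list \<Rightarrow> 'v \<Rightarrow> bool" where
  "is_path ini ter Arcs u es v \<longleftrightarrow>
     set es \<subseteq> Arcs \<and> walk ini ter u es v \<and> distinct (u # map ter es)"

definition arc_cost :: "'a set \<Rightarrow> ('a \<Rightarrow> nat) \<Rightarrow> ('a \<Rightarrow> nat) \<Rightarrow> ('a \<Rightarrow> real) \<Rightarrow> 'a \<Rightarrow> real" where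
  "arc_cost AT c d T e = (if e \<in> AT then real (c e) + T e else real (d e))"

definition path_len :: "('a \<Rightarrow> real) \<Rightarrow> 'a list \<Rightarrow> real" where
  "path_len w es = sum_list (map w es)"

definition shortest_path :: "('a \<Rightarrow> 'v) \<Rightarrow> ('a \<Rightarrow> 'v) \<Rightarrow> 'a set \<Rightarrow> ('a \<Rightarrow> real) \<Rightarrow> 'v \<Rightarrow> 'a list \<Rightarrow> 'v \<Rightarrow> bool" where
  "shortest_path ini ter Arcs w u P v \<longleftrightarrow>
     is_path ini ter Arcs u P v \<and> (\<forall>Q. is_path ini ter Arcs u Q v \<longrightarrow> path_len w P \<le> path_len w Q)"

text \<open>Arc set of N_T(P): all toll-free arcs plus the toll arcs on P.\<close>
definition net_arcs :: "'a set \<Rightarrow> 'a set \<Rightarrow> 'a list \<Rightarrow> 'a set" where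
  "net_arcs AT AU P = AU \<union> (AT \<inter> set P)"

text \<open>Toll arcs of P in order of traversal: tau_i = tolls AT P ! (i - 1), 1 <= i <= m.\<close>
definition tolls :: "'a set \<Rightarrow> 'a list \<Rightarrow> 'a list" where
  "tolls AT P = filter (\<lambda>e. e \<in> AT) P"

definition valid_path :: "'a set \<Rightarrow> 'a set \<Rightarrow> ('a \<Rightarrow> 'v) \<Rightarrow> ('a \<Rightarrow> 'v) \<Rightarrow> ('a \<Rightarrow> nat) \<Rightarrow> ('a \<Rightarrow> nat)
    \<Rightarrow> 'v \<Rightarrow> 'v \<Rightarrow> 'a list \<Rightarrow> bool" where
  "valid_path AT AU ini ter c d s t P \<longleftrightarrow>
     is_path ini ter (AT \<union> AU) s P t \<and> length (tolls AT P) \<ge> 1 \<and>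
     shortest_path ini ter (net_arcs AT AU P) (arc_cost AT c d (\<lambda>_. 0)) s P t"

definition consistent :: "'a set \<Rightarrow> 'a set \<Rightarrow> ('a \<Rightarrow> 'v) \<Rightarrow> ('a \<Rightarrow> 'v) \<Rightarrow> ('a \<Rightarrow> nat) \<Rightarrow> ('a \<Rightarrow> nat)
    \<Rightarrow> 'v \<Rightarrow> 'v \<Rightarrow> ('a \<Rightarrow> real) \<Rightarrow> 'a list \<Rightarrow> bool" where
  "consistent AT AU ini ter c d s t T P \<longleftrightarrow>
     shortest_path ini ter (net_arcs AT AU P) (arc_cost AT c d T) s P t"

text \<open>TERM(tau_i) with TERM(tau_0) = s, and INIT(tau_j) with INIT(tau_(m+1)) = t.\<close>
definition term_tau :: "'a set \<Rightarrow> ('a \<Rightarrow> 'v) \<Rightarrow> 'v \<Rightarrow> 'a list \<Rightarrow> nat \<Rightarrow> 'v" where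
  "term_tau AT ter s P i = (if i = 0 then s else ter (tolls AT P ! (i - 1)))"

definition init_tau :: "'a set \<Rightarrow> ('a \<Rightarrow> 'v) \<Rightarrow> 'v \<Rightarrow> 'a list \<Rightarrow> nat \<Rightarrow> 'v" where
  "init_tau AT ini t P j = (if j = length (tolls AT P) + 1 then t else ini (tolls AT P ! (j - 1)))"

text \<open>Shortest toll-free path length from u to v (+infinity if none).\<close>
definition tf_dist :: "'a set \<Rightarrow> ('a \<Rightarrow> 'v) \<Rightarrow> ('a \<Rightarrow> 'v) \<Rightarrow> ('a \<Rightarrow> nat) \<Rightarrow> 'v \<Rightarrow> 'v \<Rightarrow> ereal" where
  "tf_dist AU ini ter d u v =
     Inf {ereal (path_len (\<lambda>e. real (d e)) Q) | Q. is_path ini ter AU u Q v}"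

definition U_ij :: "'a set \<Rightarrow> 'a set \<Rightarrow> ('a \<Rightarrow> 'v) \<Rightarrow> ('a \<Rightarrow> 'v) \<Rightarrow> ('a \<Rightarrow> nat)
    \<Rightarrow> 'v \<Rightarrow> 'v \<Rightarrow> 'a list \<Rightarrow> nat \<Rightarrow> nat \<Rightarrow> ereal" where
  "U_ij AT AU ini ter d s t P i j =
     tf_dist AU ini ter d (term_tau AT ter s P i) (init_tau AT ini t P j)"

definition L_ij :: "'a set \<Rightarrow> 'a set \<Rightarrow> ('a \<Rightarrow> 'v) \<Rightarrow> ('a \<Rightarrow> 'v) \<Rightarrow> ('a \<Rightarrow> nat) \<Rightarrow> ('a \<Rightarrow> nat)
    \<Rightarrow> 'v \<Rightarrow> 'v \<Rightarrow> 'a list \<Rightarrow> nat \<Rightarrow> nat \<Rightarrow> ereal" where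
  "L_ij AT AU ini ter c d s t P k l =
     (\<Sum>i\<in>{k..<l}. U_ij AT AU ini ter d s t P i (i + 1))
     + ereal (\<Sum>i\<in>{k<..<l}. real (c (tolls AT P ! (i - 1))))"

definition T_ij :: "'a set \<Rightarrow> ('a \<Rightarrow> real) \<Rightarrow> 'a list \<Rightarrow> nat \<Rightarrow> nat \<Rightarrow> real" where
  "T_ij AT T P k l = (\<Sum>i\<in>{k<..<l}. T (tolls AT P ! (i - 1)))"

end

theory Submission
  imports Defs
begin


lemma walk_append: "walk ini ter u (xs @ ys) v \<longleftrightarrow> (\<exists>w. walk ini ter u xs w \<and> walk ini ter w ys v)"
  by (induction xs arbitrary: u) auto

lemma walk_ini_nth: "walk ini ter u xs v \<Longrightarrow> k < length xs \<Longrightarrow> ini (xs!k) = (u # map ter xs)!k"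
proof (induction xs arbitrary: u k)
  case Nil then show ?case by simp
next
  case (Cons x xs) then show ?case by (cases k) auto
qed

lemma walk_end: "walk ini ter u xs v \<Longrightarrow> (u # map ter xs) ! length xs = v"
  by (induction xs arbitrary: u) auto

lemma walk_sub: "walk ini ter u xs v \<Longrightarrow> a \<le> b \<Longrightarrow> b \<le> length xs \<Longrightarrow>
  walk ini ter ((u # map ter xs)!a) (drop a (take b xs)) ((u # map ter xs)!b)"
proof (induction xs arbitrary: u a b)
  case Nil then show ?case by simp
next
  case (Cons x xs)
  show ?case
  proof (cases a)
    case 0
    show ?thesis
    proof (cases b)
      case 0 then show ?thesis using \<open>a = 0\<close> by simp
    next
      case (Suc b')
      have "walk ini ter ((ter x # map ter xs)!0) (drop 0 (take b' xs)) ((ter x # map ter xs)!b')"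
        using Cons.IH[of "ter x" 0 b'] Cons.prems Suc by simp
      then show ?thesis using Cons.prems 0 Suc by simp
    qed
  next
    case (Suc a')
    then obtain b' where b: "b = Suc b'" using Cons.prems by (cases b) auto
    have "walk ini ter ((ter x # map ter xs)!a') (drop a' (take b' xs)) ((ter x # map ter xs)!b')"
      using Cons Suc b by simp
    then show ?thesis using Suc b by simp
  qed
qed

lemma path_len_append[simp]: "path_len w (xs@ys) = path_len w xs + path_len w ys"
  by (simp add: path_len_def)

lemma path_len_Nil[simp]: "path_len w [] = 0" and path_len_Cons[simp]: "path_len w (x#xs) = w x + path_len w xs"
  by (simp_all add: path_len_def)

lemma path_len_nonneg: "\<forall>e\<in>set xs. 0 \<le> w e \<Longrightarrow> 0 \<le> path_len w xs"
  unfolding path_len_def by (induction xs) auto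

lemma take_split3: "i \<le> j \<Longrightarrow> take i xs @ drop i (take j xs) @ drop j xs = xs"
  by (metis append.assoc append_take_drop_id min.absorb1 take_take)

lemma take_split2: "a \<le> b \<Longrightarrow> take b xs = take a xs @ drop a (take b xs)"
  by (metis append_take_drop_id min.absorb1 take_take)

lemma path_len_take_split: "a \<le> b \<Longrightarrow>
   path_len w (take b xs) = path_len w (take a xs) + path_len w (drop a (take b xs))"
  by (metis path_len_append take_split2)

lemma in_set_seg: "x \<in> set (drop a (take b xs)) \<Longrightarrow> \<exists>k. a \<le> k \<and> k < b \<and> k < length xs \<and> x = xs!k"
proof -
  assume "x \<in> set (drop a (take b xs))"
  then obtain n where n: "n < length (drop a (take b xs))" "x = drop a (take b xs) ! n"
    by (auto simp: in_set_conv_nth)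
  then have "a + n < b" "a + n < length xs" by auto
  moreover have "x = xs ! (a+n)" using n calculation by (simp add: nth_take)
  ultimately show ?thesis by (intro exI[of _ "a+n"]) auto
qed

lemma distinct_seg: "distinct (u # map ter xs) \<Longrightarrow> a \<le> b \<Longrightarrow> b \<le> length xs \<Longrightarrow>
  distinct ((u # map ter xs)!a # map ter (drop a (take b xs)))"
proof -
  assume d: "distinct (u # map ter xs)" and ab: "a \<le> b" "b \<le> length xs"
  have "(u # map ter xs)!a # map ter (drop a (take b xs)) = drop a (take (Suc b) (u # map ter xs))"
  proof (cases a)
    case 0 then show ?thesis by (simp add: take_map)
  next
    case (Suc a')
    then have al: "a' < length (take b xs)" using ab by simp
    then have e1: "drop a' (take b xs) = (take b xs)!a' # drop (Suc a') (take b xs)"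
      by (rule Cons_nth_drop_Suc[symmetric])
    have e2: "(take b xs)!a' = xs!a'" using al by simp
    have e3: "(u # map ter xs)!a = ter (xs!a')" using Suc al by simp
    have "drop a (take (Suc b) (u # map ter xs)) = drop a' (take b (map ter xs))"
      using Suc by simp
    also have "\<dots> = map ter (drop a' (take b xs))" by (simp only: take_map drop_map)
    also have "\<dots> = ter (xs!a') # map ter (drop a (take b xs))" using e1 e2 Suc by simp
    finally show ?thesis using e3 by simp
  qed
  moreover have "distinct (drop a (take (Suc b) (u # map ter xs)))"
    by (intro distinct_drop distinct_take d)
  ultimately show ?thesis by (simp only:)
qed

lemma walk_to_path: "walk ini ter u xs v \<Longrightarrow> \<forall>e\<in>set xs. 0 \<le> w e \<Longrightarrow>
  \<exists>ys. walk ini ter u ys v \<and> distinct (u # map ter ys) \<and> set ys \<subseteq> set xs \<and> path_len w ys \<le> path_len w xs"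
proof (induction "length xs" arbitrary: xs rule: less_induct)
  case less
  show ?case
  proof (cases "distinct (u # map ter xs)")
    case True then show ?thesis using less.prems by blast
  next
    case False
    let ?vs = "u # map ter xs"
    from False obtain i0 j0 where ij0: "i0 < length ?vs" "j0 < length ?vs" "i0 \<noteq> j0" "?vs!i0 = ?vs!j0"
      unfolding distinct_conv_nth by blast
    define i where "i = min i0 j0"
    define j where "j = max i0 j0"
    have ij: "i < j" "j < length ?vs" "?vs!i = ?vs!j"
      using ij0 unfolding i_def j_def by (auto simp: min_def max_def)
    then have jl: "j \<le> length xs" by simp
    define ys where "ys = take i xs @ drop j xs"
    have w1: "walk ini ter u (take i xs) (?vs!i)"
      using walk_sub[OF less.prems(1), of 0 i] ij by simp
    have w2: "walk ini ter (?vs!j) (drop j xs) v"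
      using walk_sub[OF less.prems(1), of j "length xs"] jl walk_end[OF less.prems(1)] by simp
    have wy: "walk ini ter u ys v" using w1 w2 ij(3) unfolding ys_def walk_append by metis
    have ly: "length ys < length xs" using ij jl unfolding ys_def by simp
    have sy: "set ys \<subseteq> set xs" unfolding ys_def using set_take_subset[of i xs] set_drop_subset[of j xs] by auto
    have py: "path_len w ys \<le> path_len w xs"
    proof -
      have "path_len w xs = path_len w (take i xs @ drop i (take j xs) @ drop j xs)"
        using take_split3[of i j xs] ij by simp
      then have "path_len w xs = path_len w (take i xs) + path_len w (drop i (take j xs)) + path_len w (drop j xs)"
        by simp
      moreover have "0 \<le> path_len w (drop i (take j xs))"
        using less.prems(2) by (intro path_len_nonneg) (meson in_mono set_drop_subset set_take_subset)
      ultimately show ?thesis unfolding ys_def by simp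
    qed
    obtain zs where "walk ini ter u zs v \<and> distinct (u # map ter zs) \<and> set zs \<subseteq> set ys \<and> path_len w zs \<le> path_len w ys"
      using less.hyps[OF ly wy] less.prems(2) sy by blast
    then show ?thesis using sy py by (meson dual_order.trans)
  qed
qed

lemma splice:
  assumes sp: "shortest_path ini ter N W s P t" and nn: "\<forall>e. 0 \<le> W e" and R: "set R \<subseteq> N"
    and wR: "walk ini ter ((s # map ter P)!a) R ((s # map ter P)!b)" and ab: "a \<le> b" "b \<le> length P"
  shows "path_len W (drop a (take b P)) \<le> path_len W R"
proof -
  have ip: "is_path ini ter N s P t" and sh: "\<forall>Q. is_path ini ter N s Q t \<longrightarrow> path_len W P \<le> path_len W Q"
    using sp unfolding shortest_path_def by auto
  have wP: "walk ini ter s P t" and sP: "set P \<subseteq> N" using ip unfolding is_path_def by auto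
  have w1: "walk ini ter s (take a P) ((s # map ter P)!a)"
    using walk_sub[OF wP, of 0 a] ab by simp
  have w2: "walk ini ter ((s # map ter P)!b) (drop b P) t"
    using walk_sub[OF wP, of b "length P"] ab walk_end[OF wP] by simp
  define X where "X = take a P @ R @ drop b P"
  have wX: "walk ini ter s X t" unfolding X_def walk_append using w1 w2 wR by blast
  have sX: "set X \<subseteq> N" unfolding X_def using sP R set_take_subset set_drop_subset by fastforce
  obtain Y where Y: "walk ini ter s Y t" "distinct (s # map ter Y)" "set Y \<subseteq> set X" "path_len W Y \<le> path_len W X"
    using walk_to_path[OF wX, of W] nn by blast
  have "is_path ini ter N s Y t" using Y sX unfolding is_path_def by auto
  then have "path_len W P \<le> path_len W Y" using sh by blast
  moreover have "path_len W P = path_len W (take a P @ drop a (take b P) @ drop b P)"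
    using take_split3[of a b P] ab by simp
  then have "path_len W P = path_len W (take a P) + path_len W (drop a (take b P)) + path_len W (drop b P)"
    by simp
  ultimately show ?thesis using Y(4) unfolding X_def by simp
qed

lemma telescope:
  fixes f g :: "nat \<Rightarrow> real"
  shows "i < j \<Longrightarrow> (\<Sum>l\<in>{i..<j}. f (Suc l) - g l) + (\<Sum>l\<in>{i<..<j}. g l - f l) = f j - g i"
proof (induction j)
  case 0 then show ?case by simp
next
  case (Suc j)
  show ?case
  proof (cases "i = j")
    case True
    have "{j<..<Suc j} = {}" by auto
    then show ?thesis using True by simp
  next
    case False
    then have ij: "i < j" using Suc by simp
    have a: "{i..<Suc j} = insert j {i..<j}" using ij by auto
    have b: "{i<..<Suc j} = insert j {i<..<j}" using ij by auto
    show ?thesis using Suc.IH[OF ij] unfolding a b by simp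
  qed
qed

lemma filter_nth_conv: "filter Q xs = map (nth xs) (filter (\<lambda>k. Q (xs!k)) [0..<length xs])"
proof -
  have "filter Q xs = filter Q (map (nth xs) [0..<length xs])" by (simp add: map_nth)
  also have "\<dots> = map (nth xs) (filter (Q \<circ> nth xs) [0..<length xs])" by (rule filter_map)
  finally show ?thesis by (simp add: comp_def)
qed

lemma path_len_cong: "\<forall>e\<in>set xs. f e = g e \<Longrightarrow> path_len f xs = path_len g xs"
  by (induction xs) auto



theorem theorem4:
  fixes AT AU :: "'a set" and ini ter :: "'a \<Rightarrow> 'v" and c d :: "'a \<Rightarrow> nat"
    and s t :: 'v and T :: "'a \<Rightarrow> real" and P :: "'a list"
  assumes finite_arcs: "finite (AT \<union> AU)"
    and disjoint: "AT \<inter> AU = {}"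
    and toll_free_st: "\<exists>Q. is_path ini ter AU s Q t"
    and valid: "valid_path AT AU ini ter c d s t P"
    and nonneg: "\<forall>e\<in>AT. T e \<ge> 0"
  shows "consistent AT AU ini ter c d s t T P \<longleftrightarrow>
    (\<forall>i j. i < j \<and> j \<le> length (tolls AT P) + 1 \<longrightarrow>
       L_ij AT AU ini ter c d s t P i j + ereal (T_ij AT T P i j)
         \<le> U_ij AT AU ini ter d s t P i j)"
proof -
  define m where "m = length (tolls AT P)"
  define ks where "ks = filter (\<lambda>k. P!k \<in> AT) [0..<length P]"
  define vs where "vs = s # map ter P"
  define w where "w = arc_cost AT c d T"
  define w0 where "w0 = arc_cost AT c d (\<lambda>_. 0)"
  define \<Phi> where "\<Phi> k = path_len w (take k P)" for k
  define pos where "pos l = ks!(l-1)" for l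
  define ea where "ea i = (if i = 0 then 0 else Suc (pos i))" for i
  define ia where "ia j = (if j = m+1 then length P else pos j)" for j
  define net where "net = net_arcs AT AU P"
  have ipP: "is_path ini ter (AT \<union> AU) s P t" and mge: "m \<ge> 1" and sp0: "shortest_path ini ter net w0 s P t"
    using valid unfolding valid_path_def m_def net_def w0_def by auto
  have wP: "walk ini ter s P t" and dP: "distinct vs" and sP: "set P \<subseteq> AT \<union> AU"
    using ipP unfolding is_path_def vs_def by auto
  have tolls_ks: "tolls AT P = map (nth P) ks" unfolding tolls_def ks_def by (rule filter_nth_conv)
  have lks: "length ks = m" using tolls_ks m_def by simp
  have sks: "sorted_wrt (<) ks" unfolding ks_def by (intro sorted_wrt_filter) simp
  have ks_mem: "k \<in> set ks \<longleftrightarrow> k < length P \<and> P!k \<in> AT" for k unfolding ks_def by auto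
  have ks_lt: "l1 < l2 \<Longrightarrow> l2 < m \<Longrightarrow> ks!l1 < ks!l2" for l1 l2
    using sorted_wrt_nth_less[OF sks] lks by auto
  have ks_le: "l1 \<le> l2 \<Longrightarrow> l2 < m \<Longrightarrow> ks!l1 \<le> ks!l2" for l1 l2
    using ks_lt[of l1 l2] by (cases "l1 = l2") auto
  have ks_bound: "l < m \<Longrightarrow> ks!l < length P \<and> P!(ks!l) \<in> AT" for l
    using ks_mem nth_mem lks by metis
  have tau: "l < m \<Longrightarrow> tolls AT P ! l = P!(ks!l)" for l using tolls_ks lks by simp
  have nn: "\<forall>e. 0 \<le> w e" unfolding w_def arc_cost_def using nonneg by auto
  have nn0: "\<forall>e. 0 \<le> w0 e" unfolding w0_def arc_cost_def by auto
  have w_AU: "e \<in> AU \<Longrightarrow> w e = real (d e)" for e unfolding w_def arc_cost_def using disjoint by auto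
  have w0_AU: "e \<in> AU \<Longrightarrow> w0 e = real (d e)" for e unfolding w0_def arc_cost_def using disjoint by auto
  have lenAU: "set Q \<subseteq> AU \<Longrightarrow> path_len w Q = path_len (\<lambda>e. real (d e)) Q" for Q
    using w_AU by (intro path_len_cong) auto
  have lenAU0: "set Q \<subseteq> AU \<Longrightarrow> path_len w0 Q = path_len (\<lambda>e. real (d e)) Q" for Q
    using w0_AU by (intro path_len_cong) auto
  have P_net: "set P \<subseteq> net" unfolding net_def net_arcs_def using sP by auto
  have AU_net: "AU \<subseteq> net" unfolding net_def net_arcs_def by auto
  have cons_iff: "consistent AT AU ini ter c d s t T P \<longleftrightarrow> shortest_path ini ter net w s P t"
    unfolding consistent_def net_def w_def ..
  have vs_ini: "k < length P \<Longrightarrow> ini (P!k) = vs!k" for k using walk_ini_nth[OF wP] vs_def by simp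
  have vs_ter: "k < length P \<Longrightarrow> ter (P!k) = vs!(Suc k)" for k unfolding vs_def by simp
  have vs_end: "vs!(length P) = t" using walk_end[OF wP] vs_def by simp
  have vs0: "vs!0 = s" by (simp add: vs_def)
  have term_eq: "i \<le> m \<Longrightarrow> term_tau AT ter s P i = vs!(ea i)" for i
  proof -
    assume i: "i \<le> m"
    show ?thesis
    proof (cases "i = 0")
      case True then show ?thesis unfolding term_tau_def ea_def using vs0 by simp
    next
      case False
      then have "i - 1 < m" using i by simp
      then show ?thesis unfolding term_tau_def ea_def pos_def using False tau ks_bound vs_ter by simp
    qed
  qed
  have init_eq: "1 \<le> j \<Longrightarrow> j \<le> m+1 \<Longrightarrow> init_tau AT ini t P j = vs!(ia j)" for j
  proof -
    assume j: "1 \<le> j" "j \<le> m+1"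
    show ?thesis
    proof (cases "j = m+1")
      case True then show ?thesis unfolding init_tau_def ia_def m_def[symmetric] using vs_end by simp
    next
      case False
      then have "j - 1 < m" using j by simp
      then show ?thesis unfolding init_tau_def ia_def pos_def m_def[symmetric]
        using False tau ks_bound vs_ini by simp
    qed
  qed
  have ord1: "i < j \<Longrightarrow> j \<le> m+1 \<Longrightarrow> ea i \<le> ia j" for i j
  proof -
    assume ij: "i < j" "j \<le> m+1"
    show ?thesis
    proof (cases "i = 0")
      case True then show ?thesis unfolding ea_def by simp
    next
      case False
      then have i1: "i - 1 < m" using ij by simp
      show ?thesis
      proof (cases "j = m+1")
        case True then show ?thesis unfolding ea_def ia_def pos_def using False ks_bound[OF i1] by simp
      next
        case False
        then have "ks!(i-1) < ks!(j-1)" using ks_lt[of "i-1" "j-1"] ij \<open>i \<noteq> 0\<close> by simp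
        then show ?thesis unfolding ea_def ia_def pos_def using False \<open>i \<noteq> 0\<close> by simp
      qed
    qed
  qed
  have ord2: "1 \<le> j \<Longrightarrow> j \<le> i \<Longrightarrow> i \<le> m \<Longrightarrow> ia j \<le> ea i" for i j
  proof -
    assume ij: "1 \<le> j" "j \<le> i" "i \<le> m"
    then have "ks!(j-1) \<le> ks!(i-1)" using ks_le[of "j-1" "i-1"] by simp
    then show ?thesis unfolding ea_def ia_def pos_def using ij by simp
  qed
  have iaP: "ia j \<le> length P" if j: "1 \<le> j" "j \<le> m+1" for j
  proof (cases "j = m+1")
    case True then show ?thesis unfolding ia_def by simp
  next
    case False
    then have "j - 1 < m" using j by simp
    then show ?thesis unfolding ia_def pos_def using ks_bound[of "j-1"] False by simp
  qed
  have \<Phi>_split: "a \<le> b \<Longrightarrow> \<Phi> b - \<Phi> a = path_len w (drop a (take b P))" for a b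
    unfolding \<Phi>_def using path_len_take_split[of a b w P] by simp
  have \<Phi>_mono: "\<Phi> a \<le> \<Phi> b" if ab: "a \<le> b" for a b
  proof -
    have "0 \<le> path_len w (drop a (take b P))" using nn by (intro path_len_nonneg) auto
    then show ?thesis using \<Phi>_split[OF ab] by simp
  qed
  have \<Phi>_Suc: "k < length P \<Longrightarrow> \<Phi> (Suc k) = \<Phi> k + w (P!k)" for k
    unfolding \<Phi>_def by (simp add: take_Suc_conv_app_nth)
  have seg_free: "set (drop (ea l) (take (ia (Suc l)) P)) \<subseteq> AU" if l: "l \<le> m" for l
  proof
    fix x assume x: "x \<in> set (drop (ea l) (take (ia (Suc l)) P))"
    from in_set_seg[OF x] obtain k where k: "ea l \<le> k" "k < ia (Suc l)" "k < length P" "x = P!k"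
      by blast
    have "x \<notin> AT"
    proof
      assume "x \<in> AT"
      then have "k \<in> set ks" using ks_mem k by simp
      then obtain l' where l': "l' < m" "k = ks!l'" using lks by (auto simp: in_set_conv_nth)
      have "l \<le> l'"
      proof (cases "l = 0")
        case False
        then have "ks!(l-1) < ks!l'" using k(1) l' unfolding ea_def pos_def by simp
        have "l - 1 < l'"
        proof (rule ccontr)
          assume "\<not> l - 1 < l'"
          then have "ks!l' \<le> ks!(l-1)" using ks_le[of l' "l-1"] l False by simp
          then show False using \<open>ks!(l-1) < ks!l'\<close> by simp
        qed
        then show ?thesis by simp
      qed simp
      moreover have "l' < l"
      proof (cases "Suc l = m+1")
        case True then show ?thesis using l' \<open>l \<le> l'\<close> by simp
      next
        case False
        then have "k < ks!l" using k(2) unfolding ia_def pos_def by simp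
        show ?thesis
        proof (rule ccontr)
          assume "\<not> l' < l"
          then have "ks!l \<le> ks!l'" using ks_le[of l l'] l' by simp
          then show False using \<open>k < ks!l\<close> l' by simp
        qed
      qed
      ultimately show False by simp
    qed
    moreover have "P!k \<in> set P" using k(3) by (rule nth_mem)
    then have "x \<in> AT \<union> AU" using sP k(4) by blast
    ultimately show "x \<in> AU" by blast
  qed
  have U_seg: "U_ij AT AU ini ter d s t P l (Suc l) = ereal (\<Phi> (ia (Suc l)) - \<Phi> (ea l))"
    if l: "l \<le> m" for l
  proof -
    define sg where "sg = drop (ea l) (take (ia (Suc l)) P)"
    have o: "ea l \<le> ia (Suc l)" using ord1[of l "Suc l"] l by simp
    have b: "ia (Suc l) \<le> length P" using iaP l by simp
    have sgAU: "set sg \<subseteq> AU" using seg_free l sg_def by simp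
    have \<Phi>d: "\<Phi> (ia (Suc l)) - \<Phi> (ea l) = path_len w sg" using \<Phi>_split o sg_def by simp
    have U_eq: "U_ij AT AU ini ter d s t P l (Suc l) = tf_dist AU ini ter d (vs!(ea l)) (vs!(ia (Suc l)))"
      unfolding U_ij_def using term_eq[of l] init_eq[of "Suc l"] l by simp
    have ip_sg: "is_path ini ter AU (vs!(ea l)) sg (vs!(ia (Suc l)))"
      unfolding is_path_def sg_def using sgAU[unfolded sg_def] walk_sub[OF wP o b]
        distinct_seg[OF dP[unfolded vs_def] o b] vs_def by simp
    show ?thesis
    proof (rule antisym)
      show "U_ij AT AU ini ter d s t P l (Suc l) \<le> ereal (\<Phi> (ia (Suc l)) - \<Phi> (ea l))"
        unfolding U_eq tf_dist_def \<Phi>d lenAU[OF sgAU] by (rule Inf_lower) (use ip_sg in blast)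
      show "ereal (\<Phi> (ia (Suc l)) - \<Phi> (ea l)) \<le> U_ij AT AU ini ter d s t P l (Suc l)"
        unfolding U_eq tf_dist_def
      proof (rule Inf_greatest)
        fix x assume "x \<in> {ereal (path_len (\<lambda>e. real (d e)) Q) | Q. is_path ini ter AU (vs!(ea l)) Q (vs!(ia (Suc l)))}"
        then obtain Q where Q: "x = ereal (path_len (\<lambda>e. real (d e)) Q)" "is_path ini ter AU (vs!(ea l)) Q (vs!(ia (Suc l)))"
          by blast
        have QAU: "set Q \<subseteq> AU" using Q(2) unfolding is_path_def by simp
        have "path_len w0 sg \<le> path_len w0 Q"
          using splice[OF sp0 nn0 _ _ o b, of Q] Q(2) AU_net unfolding is_path_def vs_def sg_def by auto
        then show "ereal (\<Phi> (ia (Suc l)) - \<Phi> (ea l)) \<le> x"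
          using \<Phi>d lenAU[OF sgAU] lenAU0[OF sgAU] lenAU0[OF QAU] Q(1) by simp
      qed
    qed
  qed
  have LT: "L_ij AT AU ini ter c d s t P i j + ereal (T_ij AT T P i j) = ereal (\<Phi> (ia j) - \<Phi> (ea i))"
    if ij: "i < j" "j \<le> m+1" for i j
  proof -
    have "(\<Sum>l\<in>{i..<j}. U_ij AT AU ini ter d s t P l (l+1)) = (\<Sum>l\<in>{i..<j}. ereal (\<Phi> (ia (Suc l)) - \<Phi> (ea l)))"
      by (rule sum.cong) (use U_seg ij in auto)
    then have s1: "(\<Sum>l\<in>{i..<j}. U_ij AT AU ini ter d s t P l (l+1)) = ereal (\<Sum>l\<in>{i..<j}. \<Phi> (ia (Suc l)) - \<Phi> (ea l))"
      by simp
    have "(\<Sum>l\<in>{i<..<j}. real (c (tolls AT P ! (l-1))) + T (tolls AT P ! (l-1))) = (\<Sum>l\<in>{i<..<j}. \<Phi> (ea l) - \<Phi> (ia l))"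
    proof (rule sum.cong)
      fix l assume "l \<in> {i<..<j}"
      then have l: "1 \<le> l" "l \<le> m" using ij by auto
      then have lm: "l - 1 < m" by simp
      have "\<Phi> (ea l) - \<Phi> (ia l) = w (P!(pos l))"
        unfolding ea_def ia_def using l \<Phi>_Suc[of "pos l"] ks_bound[OF lm] pos_def by simp
      also have "\<dots> = real (c (tolls AT P ! (l-1))) + T (tolls AT P ! (l-1))"
        unfolding w_def arc_cost_def pos_def using tau[OF lm] ks_bound[OF lm] by simp
      finally show "real (c (tolls AT P ! (l-1))) + T (tolls AT P ! (l-1)) = \<Phi> (ea l) - \<Phi> (ia l)" by simp
    qed simp
    then have s2: "(\<Sum>l\<in>{i<..<j}. real (c (tolls AT P ! (l-1)))) + (\<Sum>l\<in>{i<..<j}. T (tolls AT P ! (l-1))) = (\<Sum>l\<in>{i<..<j}. \<Phi> (ea l) - \<Phi> (ia l))"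
      by (simp add: sum.distrib)
    have tel: "(\<Sum>l\<in>{i..<j}. \<Phi> (ia (Suc l)) - \<Phi> (ea l)) + (\<Sum>l\<in>{i<..<j}. \<Phi> (ea l) - \<Phi> (ia l)) = \<Phi> (ia j) - \<Phi> (ea i)"
      using telescope[of i j "\<lambda>l. \<Phi> (ia l)" "\<lambda>l. \<Phi> (ea l)"] ij by simp
    show ?thesis unfolding L_ij_def T_ij_def s1 using s2 tel by (simp add: add.assoc)
  qed
  show ?thesis
  proof
    assume cons: "consistent AT AU ini ter c d s t T P"
    then have sp: "shortest_path ini ter net w s P t" using cons_iff by simp
    show "\<forall>i j. i < j \<and> j \<le> length (tolls AT P) + 1 \<longrightarrow>
       L_ij AT AU ini ter c d s t P i j + ereal (T_ij AT T P i j) \<le> U_ij AT AU ini ter d s t P i j"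
    proof (intro allI impI)
      fix i j assume ij: "i < j \<and> j \<le> length (tolls AT P) + 1"
      then have ij': "i < j" "j \<le> m+1" using m_def by auto
      have o: "ea i \<le> ia j" using ord1 ij' by simp
      have b: "ia j \<le> length P" using iaP ij' by simp
      have U_eq: "U_ij AT AU ini ter d s t P i j = tf_dist AU ini ter d (vs!(ea i)) (vs!(ia j))"
        unfolding U_ij_def using term_eq[of i] init_eq[of j] ij' by simp
      have "ereal (\<Phi> (ia j) - \<Phi> (ea i)) \<le> U_ij AT AU ini ter d s t P i j" unfolding U_eq tf_dist_def
      proof (rule Inf_greatest)
        fix x assume "x \<in> {ereal (path_len (\<lambda>e. real (d e)) Q) | Q. is_path ini ter AU (vs!(ea i)) Q (vs!(ia j))}"
        then obtain Q where Q: "x = ereal (path_len (\<lambda>e. real (d e)) Q)" "is_path ini ter AU (vs!(ea i)) Q (vs!(ia j))"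
          by blast
        have QAU: "set Q \<subseteq> AU" using Q(2) unfolding is_path_def by simp
        have "path_len w (drop (ea i) (take (ia j) P)) \<le> path_len w Q"
          using splice[OF sp nn _ _ o b, of Q] Q(2) AU_net unfolding is_path_def vs_def by auto
        then show "ereal (\<Phi> (ia j) - \<Phi> (ea i)) \<le> x" using \<Phi>_split[OF o] lenAU[OF QAU] Q(1) by simp
      qed
      then show "L_ij AT AU ini ter c d s t P i j + ereal (T_ij AT T P i j) \<le> U_ij AT AU ini ter d s t P i j"
        using LT[OF ij'] by simp
    qed
  next
    assume H: "\<forall>i j. i < j \<and> j \<le> length (tolls AT P) + 1 \<longrightarrow>
       L_ij AT AU ini ter c d s t P i j + ereal (T_ij AT T P i j) \<le> U_ij AT AU ini ter d s t P i j"
    have K1: "\<Phi> (ia j) - \<Phi> (ea i) \<le> path_len w R"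
      if a: "i \<le> m" "1 \<le> j" "j \<le> m+1" "set R \<subseteq> AU" "walk ini ter (vs!(ea i)) R (vs!(ia j))" for i j R
    proof (cases "i < j")
      case True
      have h: "L_ij AT AU ini ter c d s t P i j + ereal (T_ij AT T P i j) \<le> U_ij AT AU ini ter d s t P i j"
        using H True a m_def by auto
      obtain R' where R': "walk ini ter (vs!(ea i)) R' (vs!(ia j))" "distinct (vs!(ea i) # map ter R')"
        "set R' \<subseteq> set R" "path_len w R' \<le> path_len w R"
        using walk_to_path[OF a(5), of w] nn by blast
      have R'AU: "set R' \<subseteq> AU" using R'(3) a(4) by auto
      have "is_path ini ter AU (term_tau AT ter s P i) R' (init_tau AT ini t P j)"
        using term_eq[OF a(1)] init_eq[OF a(2,3)] R' R'AU unfolding is_path_def by auto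
      then have "U_ij AT AU ini ter d s t P i j \<le> ereal (path_len (\<lambda>e. real (d e)) R')"
        unfolding U_ij_def tf_dist_def by (intro Inf_lower) blast
      moreover have "ereal (\<Phi> (ia j) - \<Phi> (ea i)) \<le> U_ij AT AU ini ter d s t P i j"
        using h LT[OF True a(3)] by simp
      ultimately have "ereal (\<Phi> (ia j) - \<Phi> (ea i)) \<le> ereal (path_len (\<lambda>e. real (d e)) R')"
        by (rule order_trans[rotated])
      then have "ereal (\<Phi> (ia j) - \<Phi> (ea i)) \<le> ereal (path_len w R')"
        using lenAU[OF R'AU] by simp
      then show ?thesis using R'(4) by simp
    next
      case False
      then have "ia j \<le> ea i" using ord2 a by simp
      then have "\<Phi> (ia j) \<le> \<Phi> (ea i)" by (rule \<Phi>_mono)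
      moreover have "0 \<le> path_len w R" using nn by (intro path_len_nonneg) auto
      ultimately show ?thesis by simp
    qed
    have C: "walk ini ter u Q t \<Longrightarrow> set Q \<subseteq> net \<Longrightarrow> i \<le> m \<Longrightarrow> set R \<subseteq> AU \<Longrightarrow>
        walk ini ter (vs!(ea i)) R u \<Longrightarrow> \<Phi> (length P) - \<Phi> (ea i) \<le> path_len w R + path_len w Q" for Q u i R
    proof (induction Q arbitrary: u i R)
      case Nil
      then have "u = t" by simp
      then have "walk ini ter (vs!(ea i)) R (vs!(ia (m+1)))" using Nil vs_end ia_def by simp
      from K1[OF Nil(3) _ _ Nil(4) this] show ?case using ia_def by simp
    next
      case (Cons q Q)
      from Cons.prems have iq: "ini q = u" and wQ: "walk ini ter (ter q) Q t" and qn: "q \<in> net"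
        and Qn: "set Q \<subseteq> net" by auto
      show ?case
      proof (cases "q \<in> AU")
        case True
        have "walk ini ter (vs!(ea i)) (R @ [q]) (ter q)" using Cons.prems(5) iq walk_append by fastforce
        from Cons.IH[OF wQ Qn Cons.prems(3) _ this] True Cons.prems(4) show ?thesis by simp
      next
        case False
        then have qAT: "q \<in> AT" and "q \<in> set P" using qn unfolding net_def net_arcs_def by auto
        then obtain k where k: "k < length P" "q = P!k" by (auto simp: in_set_conv_nth)
        then have "k \<in> set ks" using ks_mem qAT by simp
        then obtain l' where l': "l' < m" "k = ks!l'" using lks by (auto simp: in_set_conv_nth)
        define l where "l = Suc l'"
        have pl: "pos l = k" "1 \<le> l" "l \<le> m" using l' l_def pos_def by auto
        have ial: "ia l = k" using pl ia_def by simp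
        have eal: "ea l = Suc k" using pl ea_def by simp
        have "walk ini ter (vs!(ea i)) R (vs!(ia l))" using Cons.prems(5) iq vs_ini k ial by simp
        then have K: "\<Phi> (ia l) - \<Phi> (ea i) \<le> path_len w R" using K1 Cons.prems pl by simp
        have "walk ini ter (vs!(ea l)) [] (ter q)" using vs_ter k eal by simp
        from Cons.IH[OF wQ Qn pl(3) _ this] have I: "\<Phi> (length P) - \<Phi> (ea l) \<le> path_len w Q" by simp
        have "\<Phi> (ea l) = \<Phi> (ia l) + w q" using \<Phi>_Suc k ial eal by simp
        then show ?thesis using K I by simp
      qed
    qed
    show "consistent AT AU ini ter c d s t T P"
      unfolding cons_iff shortest_path_def
    proof (intro conjI allI impI)
      show "is_path ini ter net s P t" using ipP P_net unfolding is_path_def by auto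
      fix Q assume "is_path ini ter net s Q t"
      then have "walk ini ter s Q t" "set Q \<subseteq> net" unfolding is_path_def by auto
      from C[OF this, of 0 "[]"] have "\<Phi> (length P) - \<Phi> 0 \<le> path_len w Q" using vs0 ea_def by simp
      then show "path_len w P \<le> path_len w Q" using \<Phi>_def by simp
    qed
  qed
qed

end
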